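(* Let $\alpha>1$ be an irrational number of finite type $\tau$ and $\beta\in\mathbb{R}$. For every sufficiently small $\epsilon>0$ there is a constant $C=C(\alpha,\beta,\epsilon)$ such that for every integer $d\ge1$ and every $N\ge1$, \[ \left|\#\{n\le N:\ d\mid n,\ n\in\mathcal{B}_{\alpha,\beta}\}-\frac{N}{\alpha d}\right|\le C\,N^{\frac{\tau}{1+\tau}+\epsilon}. \]
   Context: The type of an irrational $\alpha$ is $\tau(\alpha)=\sup\{t\in\mathbb{R}:\liminf_{n\to\infty} n^t\|\alpha n\|=0\}$, where $\|\cdot\|$ is the distance to the nearest integer; finite type means $\tau<\infty$ (one always has $\tau\ge1$). The Beatty sequence is $\mathcal{B}_{\alpha,\beta}=([\alpha n+\beta])_{n=1}^\infty$, with $[\cdot]$ the integer part. *)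

theory Defs
  imports "HOL-Analysis.Analysis"
begin

definition nint_dist :: "real \<Rightarrow> real" where
  "nint_dist x = \<bar>x - of_int (round x)\<bar>"

definition irr_type :: "real \<Rightarrow> ereal" where
  "irr_type \<alpha> = Sup {ereal t | t. Liminf sequentially
      (\<lambda>n::nat. ereal (real n powr t * nint_dist (\<alpha> * real n))) = 0}"

definition beatty :: "real \<Rightarrow> real \<Rightarrow> int set" where
  "beatty \<alpha> \<beta> = {\<lfloor>\<alpha> * real n + \<beta>\<rfloor> | n::nat. n \<ge> 1}"

end

theory Submission
  imports Defs
begin


lemma sum_lessThan_real: "(\<Sum>i<q. real i) = real q * (real q - 1) / 2"
  by (induction q) (auto simp: field_simps)

lemma perm_mod:
  fixes p m :: int and q :: nat
  assumes q: "q > 0" and cop: "coprime p (int q)"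
  shows "(\<Sum>j<q. real (nat ((int j * p + m) mod int q))) = (\<Sum>i<q. real i)"
proof -
  define r where "r = (\<lambda>j::nat. nat ((int j * p + m) mod int q))"
  have rin: "r ` {..<q} \<subseteq> {..<q}"
    using q by (auto simp: r_def nat_less_iff)
  have inj: "inj_on r {..<q}"
  proof
    fix x y assume x: "x \<in> {..<q}" and y: "y \<in> {..<q}" and e: "r x = r y"
    have "(int x * p + m) mod int q = (int y * p + m) mod int q"
      using e q unfolding r_def by (simp add: nat_eq_iff2)
    hence "int q dvd (int x * p + m) - (int y * p + m)"
      by (simp add: mod_eq_dvd_iff)
    hence "int q dvd p * (int x - int y)" by (simp add: algebra_simps)
    hence dv: "int q dvd (int x - int y)"
      using cop by (metis coprime_commute coprime_dvd_mult_right_iff)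
    moreover have "\<bar>int x - int y\<bar> < int q" using x y by auto
    ultimately have "int x - int y = 0"
    proof -
      assume lt: "\<bar>int x - int y\<bar> < int q"
      show ?thesis
      proof (rule ccontr)
        assume "int x - int y \<noteq> 0"
        from dvd_imp_le_int[OF this dv] lt show False by simp
      qed
    qed
    thus "x = y" by simp
  qed
  have img: "r ` {..<q} = {..<q}" using endo_inj_surj[OF _ rin inj] by simp
  have "(\<Sum>i<q. real i) = (\<Sum>i\<in>r ` {..<q}. real i)" using img by simp
  also have "\<dots> = (\<Sum>j<q. real (r j))" by (rule sum.reindex[OF inj, unfolded comp_def])
  finally show ?thesis by (simp add: r_def)
qed

lemma G_bound:
  fixes p :: int and q :: nat and c :: real
  assumes q: "q > 0" and cop: "coprime p (int q)"
  shows "(\<Sum>j<q. frac (c + real j * p / q)) \<ge> (real q - 1) / 2"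
    and "(\<Sum>j<q. frac (c + real j * p / q)) \<le> (real q + 1) / 2"
proof -
  define m where "m = \<lfloor>real q * c\<rfloor>"
  define u where "u = c - m / q"
  have qr: "real q > 0" using q by simp
  have m1: "real_of_int m \<le> real q * c" "real q * c < real_of_int m + 1"
    unfolding m_def by linarith+
  have uq: "u * q = real q * c - m" unfolding u_def using qr by (simp add: field_simps)
  have "u * q \<ge> 0" using uq m1 by simp
  hence u0: "u \<ge> 0" using qr by (simp add: zero_le_mult_iff)
  have u1: "u * q < 1" using uq m1 by simp
  have tm: "frac (c + real j * p / q) = u + real (nat ((int j * p + m) mod int q)) / q" for j
  proof -
    define r where "r = (int j * p + m) mod int q"
    define s where "s = (int j * p + m) div int q"
    have rs: "int j * p + m = s * int q + r" by (simp add: r_def s_def)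
    have r0: "0 \<le> r" and rq: "r < int q" using q by (auto simp: r_def)
    have "c + real j * p / q = (u + r / q) + of_int s"
    proof -
      have "real_of_int (int j * p + m) = real_of_int (s * int q + r)" using rs by simp
      hence "real j * p + m = s * q + r" by simp
      thus ?thesis unfolding u_def using qr by (simp add: field_simps)
    qed
    hence "frac (c + real j * p / q) = frac (u + r / q)" by simp
    also have "\<dots> = u + r / q"
    proof (rule frac_eq_id)
      have "r \<le> int q - 1" using rq by simp
      hence "real_of_int r \<le> real q - 1" by linarith
      hence "r / q \<le> (real q - 1) / q" using qr by (simp add: divide_right_mono)
      moreover have "u < 1 / q" using u1 qr by (simp add: field_simps)
      ultimately have "u + r / q < 1" using qr by (simp add: field_simps)
      thus "u + r / q \<in> {0..<1}" using u0 r0 by simp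
    qed
    finally show ?thesis using r0 by (simp add: r_def)
  qed
  have "(\<Sum>j<q. frac (c + real j * p / q)) = q * u + (\<Sum>j<q. real (nat ((int j * p + m) mod int q))) / q"
    by (simp add: tm sum.distrib sum_divide_distrib)
  also have "\<dots> = q * u + (real q - 1) / 2"
    using perm_mod[OF q cop] sum_lessThan_real qr by simp
  finally have eq: "(\<Sum>j<q. frac (c + real j * p / q)) = q * u + (real q - 1) / 2" .
  show "(\<Sum>j<q. frac (c + real j * p / q)) \<ge> (real q - 1) / 2" using eq u0 qr by simp
  show "(\<Sum>j<q. frac (c + real j * p / q)) \<le> (real q + 1) / 2" using eq u1 by (simp add: mult.commute field_simps)
qed



lemma frac_perturb:
  fixes x y \<delta> :: real
  assumes "\<bar>x - y\<bar> \<le> \<delta>"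
  shows "frac x \<ge> frac (y + \<delta>) - 2 * \<delta>" and "frac x \<le> frac (y - \<delta>) + 2 * \<delta>"
proof -
  have "\<lfloor>x\<rfloor> \<le> \<lfloor>y + \<delta>\<rfloor>" using assms by (intro floor_mono) linarith
  hence "real_of_int \<lfloor>x\<rfloor> \<le> real_of_int \<lfloor>y + \<delta>\<rfloor>" by linarith
  thus "frac x \<ge> frac (y + \<delta>) - 2 * \<delta>" using assms unfolding frac_def by linarith
  have "\<lfloor>y - \<delta>\<rfloor> \<le> \<lfloor>x\<rfloor>" using assms by (intro floor_mono) linarith
  hence "real_of_int \<lfloor>y - \<delta>\<rfloor> \<le> real_of_int \<lfloor>x\<rfloor>" by linarith
  thus "frac x \<le> frac (y - \<delta>) + 2 * \<delta>" using assms unfolding frac_def by linarith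
qed

lemma block_bound:
  fixes \<theta> c :: real and p :: int and q :: nat
  assumes q: "q > 0" and cop: "coprime p (int q)" and ap: "\<bar>q * \<theta> - p\<bar> \<le> 1 / q"
  shows "\<bar>(\<Sum>j<q. frac (c + real j * \<theta>)) - q / 2\<bar> \<le> 5 / 2"
proof -
  have qr: "real q > 0" using q by simp
  have close: "\<bar>(c + real j * \<theta>) - (c + real j * p / q)\<bar> \<le> 1 / q" if "j < q" for j
  proof -
    have "(c + real j * \<theta>) - (c + real j * p / q) = real j * (q * \<theta> - p) / q"
      using qr by (simp add: field_simps)
    hence "\<bar>(c + real j * \<theta>) - (c + real j * p / q)\<bar> = real j * \<bar>q * \<theta> - p\<bar> / q"
      using qr by (simp add: abs_mult)
    also have "\<dots> \<le> real q * (1 / q) / q"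
      using that ap qr by (intro divide_right_mono mult_mono) auto
    also have "\<dots> = 1 / q" using qr by simp
    finally show ?thesis .
  qed
  have lo: "frac (c + real j * \<theta>) \<ge> frac ((c + 1 / q) + real j * p / q) - 2 / q" if "j < q" for j
    using frac_perturb(1)[OF close[OF that]] by (simp add: add_ac)
  have hi: "frac (c + real j * \<theta>) \<le> frac ((c - 1 / q) + real j * p / q) + 2 / q" if "j < q" for j
    using frac_perturb(2)[OF close[OF that]] by (simp add: algebra_simps)
  have "(\<Sum>j<q. frac (c + real j * \<theta>)) \<ge> (\<Sum>j<q. frac ((c + 1 / q) + real j * p / q) - 2 / q)"
    using lo by (intro sum_mono) auto
  also have "(\<Sum>j<q. frac ((c + 1 / q) + real j * p / q) - 2 / q) = (\<Sum>j<q. frac ((c + 1 / q) + real j * p / q)) - 2"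
    using qr by (simp add: sum_subtractf)
  finally have L: "(\<Sum>j<q. frac (c + real j * \<theta>)) \<ge> (real q - 1) / 2 - 2"
    using G_bound(1)[OF q cop, of "c + 1 / q"] by linarith
  have "(\<Sum>j<q. frac (c + real j * \<theta>)) \<le> (\<Sum>j<q. frac ((c - 1 / q) + real j * p / q) + 2 / q)"
    using hi by (intro sum_mono) auto
  also have "(\<Sum>j<q. frac ((c - 1 / q) + real j * p / q) + 2 / q) = (\<Sum>j<q. frac ((c - 1 / q) + real j * p / q)) + 2"
    using qr by (simp add: sum.distrib)
  finally have H: "(\<Sum>j<q. frac (c + real j * \<theta>)) \<le> (real q + 1) / 2 + 2"
    using G_bound(2)[OF q cop, of "c - 1 / q"] by linarith
  show ?thesis using L H by (simp add: abs_le_iff field_simps)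
qed



lemma sum_lessThan_add_split:
  fixes f :: "nat \<Rightarrow> real"
  shows "(\<Sum>k<n + m. f k) = (\<Sum>k<n. f k) + (\<Sum>j<m. f (n + j))"
  by (induction m) auto

lemma sum_blocks:
  fixes f :: "nat \<Rightarrow> real"
  shows "(\<Sum>k<B * q. f k) = (\<Sum>b<B. \<Sum>j<q. f (b * q + j))"
proof (induction B)
  case 0 then show ?case by simp
next
  case (Suc B)
  have "(\<Sum>k<Suc B * q. f k) = (\<Sum>k<B * q + q. f k)" by (simp add: add.commute)
  also have "\<dots> = (\<Sum>k<B * q. f k) + (\<Sum>j<q. f (B * q + j))" by (rule sum_lessThan_add_split)
  finally show ?case using Suc by simp
qed

lemma core:
  fixes \<gamma> c t :: real
  assumes t: "t > 0" and c: "c > 0"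
    and low: "\<And>m p. m \<ge> (1::nat) \<Longrightarrow> \<bar>real m * \<gamma> - real_of_int p\<bar> \<ge> c * real m powr (-t)"
  shows "\<exists>C1. \<forall>d N K a. d \<ge> (1::nat) \<longrightarrow> N \<ge> (1::nat) \<longrightarrow> d * K \<le> N \<longrightarrow>
     \<bar>(\<Sum>k<K. frac (a + real k * (- (real d * \<gamma>)))) - real K / 2\<bar> \<le> C1 * real N powr (t / (1 + t))"
proof -
  define \<kappa> where "\<kappa> = c powr (1 / t)"
  have \<kappa>: "\<kappa> > 0" using c by (simp add: \<kappa>_def)
  have \<kappa>t: "\<kappa> powr t = c" using c t by (simp add: \<kappa>_def powr_powr)
  show ?thesis
  proof (intro exI allI impI)
    fix d N K :: nat and a :: real
    assume d: "d \<ge> 1" and N: "N \<ge> 1" and dK: "d * K \<le> N"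
    define \<theta> where "\<theta> = - (real d * \<gamma>)"
    define E where "E = real N powr (t / (1 + t))"
    define s where "s = real N powr (1 / (1 + t))"
    have Nr: "real N \<ge> 1" using N by simp
    have E1: "E \<ge> 1" unfolding E_def using Nr t by (simp add: ge_one_powr_ge_zero)
    have s0: "s > 0" unfolding s_def using Nr by simp
    have sE: "s * E = real N"
    proof -
      have "s * E = real N powr (1 / (1 + t) + t / (1 + t))"
        unfolding s_def E_def using Nr by (simp add: powr_add)
      also have "1 / (1 + t) + t / (1 + t) = 1" using t by (simp add: field_simps)
      finally show ?thesis using Nr by simp
    qed
    have st: "s powr t = E" unfolding s_def E_def using Nr by (simp add: powr_powr)
    define Q where "Q = nat \<lceil>E\<rceil>"
    have QE: "E \<le> real Q" "real Q < E + 1" unfolding Q_def using E1 by linarith+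
    have Q0: "Q > 0" using QE E1 by simp
    obtain h k where cop: "coprime h k" and k0: "0 < k" and kQ: "k \<le> int Q"
      and ap: "\<bar>real_of_int k * \<theta> - real_of_int h\<bar> < 1 / real Q"
      using Dirichlet_approx_coprime[OF Q0, of \<theta>] by blast
    define q where "q = nat k"
    have kq: "k = int q" using k0 by (simp add: q_def)
    have q0: "q > 0" using k0 by (simp add: q_def)
    have qQ: "q \<le> Q" using kQ kq by simp
    have qr: "real q > 0" using q0 by simp
    have cop': "coprime h (int q)" using cop kq by simp
    have ap': "\<bar>real q * \<theta> - real_of_int h\<bar> < 1 / real Q" using ap kq by simp
    have ap2: "\<bar>real q * \<theta> - real_of_int h\<bar> \<le> 1 / real q"
    proof -
      have "1 / real Q \<le> 1 / real q" using qQ q0 by (simp add: frac_le)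
      thus ?thesis using ap' by simp
    qed
    have qd1: "q * d \<ge> 1" using q0 d by simp
    have "\<bar>real (q * d) * \<gamma> - real_of_int (- h)\<bar> \<ge> c * real (q * d) powr (-t)"
      by (rule low[OF qd1])
    moreover have "\<bar>real (q * d) * \<gamma> - real_of_int (- h)\<bar> = \<bar>real q * \<theta> - real_of_int h\<bar>"
      unfolding \<theta>_def by (simp add: abs_minus_commute algebra_simps)
    ultimately have "c * real (q * d) powr (-t) < 1 / real Q" using ap' by linarith
    hence cQ: "c * real Q < real (q * d) powr t"
      using Q0 qd1 by (simp add: powr_minus field_simps)
    have qds: "real (q * d) > \<kappa> * s"
    proof (rule ccontr)
      assume "\<not> ?thesis"
      hence "real (q * d) \<le> \<kappa> * s" by simp
      hence "real (q * d) powr t \<le> (\<kappa> * s) powr t" using t by (intro powr_mono2) auto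
      also have "\<dots> = c * E" using \<kappa> s0 by (simp add: powr_mult \<kappa>t st)
      also have "\<dots> \<le> c * real Q" using QE c by simp
      finally show False using cQ by simp
    qed
    define B where "B = K div q"
    define r where "r = K mod q"
    have Kqr: "K = B * q + r" by (simp add: B_def r_def)
    have rq: "r < q" using q0 by (simp add: r_def)
    define f where "f = (\<lambda>k::nat. frac (a + real k * \<theta>))"
    have blk: "\<bar>(\<Sum>j<q. f (b * q + j)) - real q / 2\<bar> \<le> 5 / 2" for b
    proof -
      have "(\<Sum>j<q. f (b * q + j)) = (\<Sum>j<q. frac ((a + real (b * q) * \<theta>) + real j * \<theta>))"
        unfolding f_def by (simp add: algebra_simps)
      thus ?thesis using block_bound[OF q0 cop' ap2] by simp
    qed
    have rem: "\<bar>(\<Sum>j<r. f (B * q + j)) - real r / 2\<bar> \<le> real r / 2"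
    proof -
      have A0: "(\<Sum>j<r. f (B * q + j)) \<ge> 0" unfolding f_def by (intro sum_nonneg) auto
      have "(\<Sum>j<r. f (B * q + j)) \<le> (\<Sum>j<r. (1::real))"
        unfolding f_def by (intro sum_mono) (auto intro: less_imp_le frac_lt_1)
      hence A1: "(\<Sum>j<r. f (B * q + j)) \<le> real r" by simp
      show ?thesis unfolding abs_le_iff using A0 A1 by linarith
    qed
    have split: "(\<Sum>k<K. f k) - real K / 2 =
        (\<Sum>b<B. ((\<Sum>j<q. f (b * q + j)) - real q / 2)) + ((\<Sum>j<r. f (B * q + j)) - real r / 2)"
    proof -
      have e1: "(\<Sum>k<K. f k) = (\<Sum>b<B. \<Sum>j<q. f (b * q + j)) + (\<Sum>j<r. f (B * q + j))"
        unfolding Kqr sum_lessThan_add_split sum_blocks ..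
      have e2: "(\<Sum>b<B. ((\<Sum>j<q. f (b * q + j)) - real q / 2)) = (\<Sum>b<B. \<Sum>j<q. f (b * q + j)) - real B * real q / 2"
        by (simp add: sum_subtractf)
      have e3: "real K = real B * real q + real r" using Kqr by simp
      show ?thesis using e1 e2 e3 by (simp add: field_simps)
    qed
    have "\<bar>\<Sum>b<B. ((\<Sum>j<q. f (b * q + j)) - real q / 2)\<bar> \<le> (\<Sum>b<B. \<bar>(\<Sum>j<q. f (b * q + j)) - real q / 2\<bar>)"
      by (rule sum_abs)
    also have "\<dots> \<le> (\<Sum>b<B. 5 / 2)" by (intro sum_mono blk)
    finally have S1: "\<bar>\<Sum>b<B. ((\<Sum>j<q. f (b * q + j)) - real q / 2)\<bar> \<le> 5 / 2 * real B" by simp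
    have Bbound: "real B \<le> E / \<kappa>"
    proof -
      have "real B * real q \<le> real K" using Kqr by (simp add: of_nat_mult[symmetric] del: of_nat_mult)
      hence "real B * real (q * d) \<le> real N" using dK d
        by (smt (verit, ccfv_SIG) mult.assoc mult.commute mult_right_mono of_nat_0_le_iff of_nat_le_iff of_nat_mult)
      hence "real B * (\<kappa> * s) \<le> real N" using qds
        by (smt (verit) mult_left_mono of_nat_0_le_iff)
      hence "real B * \<kappa> * s \<le> E * s" using sE by (simp add: mult.commute mult.left_commute)
      hence "real B * \<kappa> \<le> E" using s0 by simp
      thus ?thesis using \<kappa> by (simp add: field_simps)
    qed
    have rE: "real r \<le> 2 * E" using rq qQ QE E1 by linarith
    have "\<bar>(\<Sum>k<K. f k) - real K / 2\<bar> \<le> 5 / 2 * real B + real r / 2"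
      using split S1 rem by linarith
    also have "\<dots> \<le> 5 / 2 * (E / \<kappa>) + E" using Bbound rE by linarith
    also have "\<dots> = (5 / 2 / \<kappa> + 1) * E" by (simp add: field_simps)
    finally show "\<bar>(\<Sum>k<K. frac (a + real k * (- (real d * \<gamma>)))) - real K / 2\<bar> \<le> (5 / 2 / \<kappa> + 1) * real N powr (t / (1 + t))"
      unfolding f_def \<theta>_def E_def .
  qed
qed



lemma nint_dist_le: "nint_dist x \<le> \<bar>x - of_int p\<bar>"
  unfolding nint_dist_def by (rule round_diff_minimal)

lemma nint_dist_pos:
  assumes irr: "\<alpha> \<notin> \<rat>" and n: "n \<ge> (1::nat)"
  shows "nint_dist (\<alpha> * real n) > 0"
proof (rule ccontr)
  assume "\<not> ?thesis"
  hence "nint_dist (\<alpha> * real n) = 0" using nint_dist_def by (smt (verit) abs_ge_zero)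
  hence "\<alpha> * real n = of_int (round (\<alpha> * real n))" unfolding nint_dist_def by simp
  hence "\<alpha> = of_int (round (\<alpha> * real n)) / real n" using n by (simp add: field_simps)
  hence "\<alpha> \<in> \<rat>" by (metis Rats_divide Rats_of_int Rats_of_nat)
  thus False using irr by simp
qed

lemma type_lower:
  fixes \<alpha> \<tau> t :: real
  assumes irr: "\<alpha> \<notin> \<rat>" and ty: "irr_type \<alpha> = ereal \<tau>" and tt: "t > \<tau>"
  shows "\<exists>c>0. \<forall>n::nat. \<forall>p::int. n \<ge> 1 \<longrightarrow> \<bar>\<alpha> * real n - of_int p\<bar> \<ge> c * real n powr (-t)"
proof -
  define f where "f = (\<lambda>n::nat. ereal (real n powr t * nint_dist (\<alpha> * real n)))"
  have ne: "Liminf sequentially f \<noteq> 0"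
  proof
    assume "Liminf sequentially f = 0"
    hence "ereal t \<in> {ereal t | t. Liminf sequentially
      (\<lambda>n::nat. ereal (real n powr t * nint_dist (\<alpha> * real n))) = 0}" unfolding f_def by blast
    hence "ereal t \<le> irr_type \<alpha>" unfolding irr_type_def by (rule Sup_upper)
    thus False using ty tt by simp
  qed
  have "0 \<le> Liminf sequentially f"
    by (rule Liminf_bounded) (auto simp: f_def nint_dist_def)
  hence "0 < Liminf sequentially f" using ne by simp
  then obtain c0 where c0: "0 < ereal c0" "ereal c0 < Liminf sequentially f"
    using ereal_dense2 by blast
  have "\<forall>\<^sub>F n in sequentially. ereal c0 < f n" by (rule less_LiminfD[OF c0(2)])
  then obtain n0 where n0: "\<And>n. n \<ge> n0 \<Longrightarrow> c0 < real n powr t * nint_dist (\<alpha> * real n)"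
    unfolding eventually_sequentially f_def by auto
  define g where "g = (\<lambda>n::nat. real n powr t * nint_dist (\<alpha> * real n))"
  define c where "c = Min (insert c0 (g ` {1..<n0}))"
  have fin: "finite (insert c0 (g ` {1..<n0}))" by simp
  have cpos: "c > 0"
    unfolding c_def using c0(1) fin
    by (subst Min_gr_iff) (auto simp: g_def intro!: mult_pos_pos nint_dist_pos[OF irr])
  have cle: "c \<le> g n" if "n \<ge> 1" for n
  proof (cases "n < n0")
    case True
    hence "g n \<in> insert c0 (g ` {1..<n0})" using that by auto
    thus ?thesis unfolding c_def using fin by simp
  next
    case False
    have "c \<le> c0" unfolding c_def using fin by simp
    also have "c0 < g n" using n0 False unfolding g_def by simp
    finally show ?thesis by simp
  qed
  show ?thesis
  proof (intro exI[of _ c] conjI allI impI cpos)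
    fix n :: nat and p :: int assume n: "n \<ge> 1"
    have np: "real n powr t > 0" using n by simp
    have "c \<le> real n powr t * nint_dist (\<alpha> * real n)" using cle[OF n] by (simp add: g_def)
    hence "c * real n powr (-t) \<le> nint_dist (\<alpha> * real n)"
      using np n by (simp add: powr_minus field_simps)
    also have "\<dots> \<le> \<bar>\<alpha> * real n - of_int p\<bar>" by (rule nint_dist_le)
    finally show "\<bar>\<alpha> * real n - of_int p\<bar> \<ge> c * real n powr (-t)" .
  qed
qed

lemma tau_nonneg:
  fixes \<alpha> \<tau> :: real
  assumes irr: "\<alpha> \<notin> \<rat>" and ty: "irr_type \<alpha> = ereal \<tau>"
  shows "\<tau> \<ge> 0"
proof (rule ccontr)
  assume "\<not> ?thesis"
  hence tn: "\<tau> < 0" by simp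
  obtain c where c: "c > 0" and cb: "\<And>n p. n \<ge> (1::nat) \<Longrightarrow> \<bar>\<alpha> * real n - of_int p\<bar> \<ge> c * real n powr (-(\<tau>/2))"
    using type_lower[OF irr ty, of "\<tau>/2"] tn by auto
  define M where "M = nat \<lceil>2 / c\<rceil> + 1"
  have M0: "M > 0" by (simp add: M_def)
  have Mc: "real M > 2 / c" unfolding M_def by linarith
  obtain h k where k0: "0 < k" and ap: "\<bar>real_of_int k * \<alpha> - real_of_int h\<bar> < 1 / real M"
    using Dirichlet_approx[OF M0, of \<alpha>] by blast
  define n where "n = nat k"
  have n1: "n \<ge> 1" using k0 by (simp add: n_def)
  have kn: "real_of_int k = real n" using k0 by (simp add: n_def)
  have "1 / real M < c / 2" using Mc c M0 by (simp add: field_simps)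
  hence lt: "\<bar>\<alpha> * real n - of_int h\<bar> < c / 2" using ap kn by (simp add: mult.commute)
  have "real n powr (-(\<tau>/2)) \<ge> 1" using n1 tn by (intro ge_one_powr_ge_zero) auto
  hence "c \<le> c * real n powr (-(\<tau>/2))" using c by simp
  also have "\<dots> \<le> \<bar>\<alpha> * real n - of_int h\<bar>" by (rule cb[OF n1])
  finally show False using lt c by simp
qed

lemma gamma_lower:
  fixes \<alpha> c t :: real
  assumes a1: "\<alpha> > 1" and c: "c > 0" and t: "t \<ge> 0"
    and low: "\<And>n p. n \<ge> (1::nat) \<Longrightarrow> \<bar>\<alpha> * real n - of_int p\<bar> \<ge> c * real n powr (-t)"
  shows "\<exists>c'>0. \<forall>m p. m \<ge> (1::nat) \<longrightarrow> \<bar>real m * (1 / \<alpha>) - of_int p\<bar> \<ge> c' * real m powr (-t)"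
proof -
  define c1 where "c1 = min c 1"
  define c' where "c' = c1 * 2 powr (-t) / \<alpha>"
  have c1: "c1 > 0" "c1 \<le> 1" "c1 \<le> c" using c by (auto simp: c1_def)
  have "2 powr t \<ge> (1::real)" using t by (intro ge_one_powr_ge_zero) auto
  hence tp: "2 powr (-t) \<le> 1" "2 powr (-t) > 0" by (auto simp: powr_minus field_simps)
  have c'0: "c' > 0" using c1 a1 by (simp add: c'_def)
  have c'a: "c' \<le> 1 / \<alpha>"
  proof -
    have "c1 * 2 powr (-t) \<le> 1" using c1 tp by (simp add: mult_le_one)
    thus ?thesis unfolding c'_def using a1 by (simp add: divide_right_mono)
  qed
  show ?thesis
  proof (intro exI[of _ c'] conjI allI impI c'0)
    fix m :: nat and p :: int assume m: "m \<ge> 1"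
    have mr: "real m \<ge> 1" using m by simp
    have "real m powr t \<ge> 1" using mr t by (intro ge_one_powr_ge_zero) auto
    hence mt: "real m powr (-t) \<le> 1" by (auto simp add: powr_minus_divide divide_le_eq_1)
    have mt0: "real m powr (-t) > 0" using mr by simp
    have "c' * real m powr (-t) \<le> c' * 1" using mt c'0 by (intro mult_left_mono) auto
    hence small: "c' * real m powr (-t) \<le> 1 / \<alpha>" using c'a by simp
    have ia: "1 / \<alpha> < 1" using a1 by simp
    show "\<bar>real m * (1 / \<alpha>) - of_int p\<bar> \<ge> c' * real m powr (-t)"
    proof (cases "p \<le> 0")
      case True
      have "1 / \<alpha> \<le> real m / \<alpha>" using mr a1 by (simp add: divide_right_mono)
      also have "\<dots> \<le> \<bar>real m * (1 / \<alpha>) - of_int p\<bar>" using True a1 by simp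
      finally show ?thesis using small by linarith
    next
      case False
      show ?thesis
      proof (cases "\<bar>real m * (1 / \<alpha>) - of_int p\<bar> \<ge> 1")
        case True
        thus ?thesis using small ia by linarith
      next
        case False2: False
        have "real m / \<alpha> < real m" using a1 mr by (simp add: divide_less_eq)
        hence pb: "real_of_int p \<le> 2 * real m" using False2 mr by (simp add: abs_if split: if_splits)
        define n where "n = nat p"
        have n1: "n \<ge> 1" using False by (simp add: n_def)
        have pn: "real_of_int p = real n" using False by (simp add: n_def)
        have "c * real n powr (-t) \<le> \<bar>\<alpha> * real n - of_int (int m)\<bar>" by (rule low[OF n1])
        moreover have "(2 * real m) powr (-t) \<le> real n powr (-t)"
          using pb pn n1 t by (intro powr_mono2') auto
        moreover have "(2 * real m) powr (-t) = 2 powr (-t) * real m powr (-t)"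
          by (simp add: powr_mult)
        ultimately have "c1 * (2 powr (-t) * real m powr (-t)) \<le> \<bar>\<alpha> * real n - of_int (int m)\<bar>"
        proof -
          assume A: "c * real n powr (-t) \<le> \<bar>\<alpha> * real n - of_int (int m)\<bar>"
            and B: "(2 * real m) powr (-t) \<le> real n powr (-t)"
            and E: "(2 * real m) powr (-t) = 2 powr (-t) * real m powr (-t)"
          have "c1 * (2 powr (-t) * real m powr (-t)) \<le> c * (2 powr (-t) * real m powr (-t))"
            using c1 tp mt0 by (intro mult_right_mono) auto
          also have "\<dots> \<le> c * real n powr (-t)" using B E c by (intro mult_left_mono) auto
          finally show ?thesis using A by linarith
        qed
        moreover have "\<bar>\<alpha> * real n - of_int (int m)\<bar> = \<alpha> * \<bar>real m * (1 / \<alpha>) - of_int p\<bar>"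
        proof -
          have "\<alpha> * real n - of_int (int m) = - (\<alpha> * (real m * (1 / \<alpha>) - of_int p))"
            using a1 pn by (simp add: field_simps)
          thus ?thesis using a1 by (simp add: abs_mult)
        qed
        ultimately have "c1 * 2 powr (-t) * real m powr (-t) \<le> \<alpha> * \<bar>real m * (1 / \<alpha>) - of_int p\<bar>"
          by (simp add: mult.assoc)
        thus ?thesis unfolding c'_def using a1 by (simp add: field_simps)
      qed
    qed
  qed
qed



lemma ceil_frac: "real_of_int \<lceil>x\<rceil> = x + frac (- x)"
  by (simp add: ceiling_def frac_def)

lemma floor_interval:
  fixes \<alpha> \<beta> :: real and m D :: int
  assumes "\<alpha> > 0"
  shows "(\<lfloor>\<alpha> * m + \<beta>\<rfloor> = D) \<longleftrightarrow> ((D - \<beta>) / \<alpha> \<le> m \<and> m < (D + 1 - \<beta>) / \<alpha>)"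
  using assms by (simp add: floor_eq_iff pos_divide_le_eq pos_less_divide_eq algebra_simps)

lemma ind_cases:
  fixes \<alpha> \<beta> :: real and D :: int
  assumes a1: "\<alpha> > 1"
  defines "a \<equiv> (real_of_int D - \<beta>) / \<alpha>" and "b \<equiv> (real_of_int D + 1 - \<beta>) / \<alpha>"
  shows "(\<exists>m::int. \<lfloor>\<alpha> * m + \<beta>\<rfloor> = D) \<Longrightarrow> \<lceil>b\<rceil> - \<lceil>a\<rceil> = 1"
    and "\<not> (\<exists>m::int. \<lfloor>\<alpha> * m + \<beta>\<rfloor> = D) \<Longrightarrow> \<lceil>b\<rceil> - \<lceil>a\<rceil> = 0"
proof -
  have ba: "b = a + 1 / \<alpha>" unfolding a_def b_def using a1 by (simp add: field_simps)
  have ia: "0 < 1 / \<alpha>" "1 / \<alpha> < 1" using a1 by auto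
  have mono: "\<lceil>a\<rceil> \<le> \<lceil>b\<rceil>" using ba ia by (intro ceiling_mono) simp
  have up: "\<lceil>b\<rceil> \<le> \<lceil>a\<rceil> + 1"
  proof -
    have "a \<le> of_int \<lceil>a\<rceil>" by simp
    hence "b \<le> of_int \<lceil>a\<rceil> + 1" using ba ia by linarith
    thus ?thesis by (simp add: ceiling_le_iff)
  qed
  {
    assume "\<exists>m::int. \<lfloor>\<alpha> * m + \<beta>\<rfloor> = D"
    then obtain m :: int where "\<lfloor>\<alpha> * m + \<beta>\<rfloor> = D" by blast
    hence "a \<le> m" "m < b" using floor_interval[of \<alpha> m \<beta> D] a1 unfolding a_def b_def by auto
    hence "\<lceil>a\<rceil> \<le> m" by (simp add: ceiling_le)
    hence "of_int \<lceil>a\<rceil> < b" using \<open>m < b\<close> by (smt (verit) of_int_le_iff)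
    hence "\<lceil>a\<rceil> < \<lceil>b\<rceil>" by (smt (verit) le_of_int_ceiling of_int_less_iff)
    thus "\<lceil>b\<rceil> - \<lceil>a\<rceil> = 1" using up by simp
  }
  {
    assume nm: "\<not> (\<exists>m::int. \<lfloor>\<alpha> * m + \<beta>\<rfloor> = D)"
    have "a \<le> of_int \<lceil>a\<rceil>" by simp
    hence "\<not> (of_int \<lceil>a\<rceil> < b)" using nm floor_interval[of \<alpha> "\<lceil>a\<rceil>" \<beta> D] a1 unfolding a_def b_def by auto
    hence "\<lceil>b\<rceil> \<le> \<lceil>a\<rceil>" by (simp add: ceiling_le)
    thus "\<lceil>b\<rceil> - \<lceil>a\<rceil> = 0" using mono by simp
  }
qed

lemma beatty_iff:
  fixes \<alpha> \<beta> :: real and D :: int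
  assumes a1: "\<alpha> > 1" and Db: "real_of_int D > \<beta>"
  shows "D \<in> beatty \<alpha> \<beta> \<longleftrightarrow> (\<exists>m::int. \<lfloor>\<alpha> * m + \<beta>\<rfloor> = D)"
proof
  assume "D \<in> beatty \<alpha> \<beta>"
  then obtain n :: nat where "D = \<lfloor>\<alpha> * real n + \<beta>\<rfloor>" unfolding beatty_def by auto
  thus "\<exists>m::int. \<lfloor>\<alpha> * m + \<beta>\<rfloor> = D" by (intro exI[of _ "int n"]) simp
next
  assume "\<exists>m::int. \<lfloor>\<alpha> * m + \<beta>\<rfloor> = D"
  then obtain m :: int where m: "\<lfloor>\<alpha> * m + \<beta>\<rfloor> = D" by blast
  hence "real_of_int D \<le> \<alpha> * m + \<beta>" by linarith
  hence "\<alpha> * m > 0" using Db by linarith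
  hence "m > 0" using a1 by (simp add: zero_less_mult_iff)
  hence "nat m \<ge> 1" "real (nat m) = real_of_int m" by auto
  thus "D \<in> beatty \<alpha> \<beta>" unfolding beatty_def using m by (intro CollectI exI[of _ "nat m"]) auto
qed



lemma assembly:
  fixes \<alpha> \<beta> t C1 :: real and d N :: nat
  assumes a1: "\<alpha> > 1" and t: "t > 0"
    and core: "\<And>d N K a. d \<ge> (1::nat) \<Longrightarrow> N \<ge> (1::nat) \<Longrightarrow> d * K \<le> N \<Longrightarrow>
       \<bar>(\<Sum>k<K. frac (a + real k * (- (real d * (1 / \<alpha>))))) - real K / 2\<bar> \<le> C1 * real N powr (t / (1 + t))"
    and d: "d \<ge> 1" and N: "N \<ge> 1"
  shows "\<bar>real (card {n::nat. 1 \<le> n \<and> n \<le> N \<and> d dvd n \<and> int n \<in> beatty \<alpha> \<beta>})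
                 - real N / (\<alpha> * real d)\<bar> \<le> (\<bar>\<beta>\<bar> + 2 * \<bar>C1\<bar> + 1) * real N powr (t / (1 + t))"
proof -
  define K where "K = N div d"
  define E where "E = real N powr (t / (1 + t))"
  have E1: "E \<ge> 1" unfolding E_def using N t by (simp add: ge_one_powr_ge_zero)
  define P where "P = (\<lambda>k::nat. int (d * k) \<in> beatty \<alpha> \<beta>)"
  have dK: "d * K \<le> N" unfolding K_def by (simp add: mult.commute)
  have setEq: "{n::nat. 1 \<le> n \<and> n \<le> N \<and> d dvd n \<and> int n \<in> beatty \<alpha> \<beta>} = (\<lambda>k. d * k) ` {k \<in> {1..K}. P k}"
  proof (rule set_eqI, rule iffI)
    fix n assume "n \<in> {n::nat. 1 \<le> n \<and> n \<le> N \<and> d dvd n \<and> int n \<in> beatty \<alpha> \<beta>}"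
    hence n: "1 \<le> n" "n \<le> N" "d dvd n" "int n \<in> beatty \<alpha> \<beta>" by auto
    then obtain k where k: "n = d * k" by blast
    have "k \<ge> 1" using n(1) k by (cases k) auto
    moreover have "k \<le> K" unfolding K_def using n(2) k d
      by (simp add: less_eq_div_iff_mult_less_eq mult.commute)
    ultimately show "n \<in> (\<lambda>k. d * k) ` {k \<in> {1..K}. P k}" using k n(4) unfolding P_def by auto
  next
    fix n assume "n \<in> (\<lambda>k. d * k) ` {k \<in> {1..K}. P k}"
    then obtain k where k: "n = d * k" "1 \<le> k" "k \<le> K" "P k" by auto
    have "d * k \<le> d * K" using k by simp
    hence "n \<le> N" using dK k(1) by linarith
    moreover have "1 \<le> n" using k d by simp
    ultimately show "n \<in> {n::nat. 1 \<le> n \<and> n \<le> N \<and> d dvd n \<and> int n \<in> beatty \<alpha> \<beta>}"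
      using k unfolding P_def by auto
  qed
  have inj: "inj_on (\<lambda>k. d * k) {k \<in> {1..K}. P k}" using d by (auto simp: inj_on_def)
  define ind where "ind = (\<lambda>k::nat. real_of_int (\<lceil>(real_of_int (int (d * k)) + 1 - \<beta>) / \<alpha>\<rceil> - \<lceil>(real_of_int (int (d * k)) - \<beta>) / \<alpha>\<rceil>))"
  have cardsum: "real (card {n::nat. 1 \<le> n \<and> n \<le> N \<and> d dvd n \<and> int n \<in> beatty \<alpha> \<beta>})
      = (\<Sum>k\<in>{1..K}. if P k then 1 else 0)"
  proof -
    have "card {n::nat. 1 \<le> n \<and> n \<le> N \<and> d dvd n \<and> int n \<in> beatty \<alpha> \<beta>} = card {k \<in> {1..K}. P k}"
      unfolding setEq by (rule card_image[OF inj])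
    hence "real (card {n::nat. 1 \<le> n \<and> n \<le> N \<and> d dvd n \<and> int n \<in> beatty \<alpha> \<beta>}) = (\<Sum>k\<in>{k \<in> {1..K}. P k}. (1::real))"
      by simp
    also have "\<dots> = (\<Sum>k\<in>{1..K}. if P k then 1 else 0)" by (rule sum.inter_filter) simp
    finally show ?thesis .
  qed
  have termb: "\<bar>(if P k then 1 else 0) - ind k\<bar> \<le> (if real k \<le> \<beta> then 1 else 0)" if k1: "k \<ge> 1" for k
  proof -
    have ic: "ind k = 1 \<or> ind k = 0"
      using ind_cases[OF a1, where D="int (d * k)" and \<beta>=\<beta>] unfolding ind_def by (cases "\<exists>m::int. \<lfloor>\<alpha> * m + \<beta>\<rfloor> = int (d * k)") auto
    show ?thesis
    proof (cases "real k \<le> \<beta>")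
      case True thus ?thesis using ic by auto
    next
      case False
      have "k \<le> d * k" using d by simp
      hence "real k \<le> real (d * k)" by (simp only: of_nat_le_iff)
      hence Db: "real_of_int (int (d * k)) > \<beta>" using False by simp
      have "P k \<longleftrightarrow> (\<exists>m::int. \<lfloor>\<alpha> * m + \<beta>\<rfloor> = int (d * k))"
        unfolding P_def by (rule beatty_iff[OF a1 Db])
      hence "ind k = (if P k then 1 else 0)"
      proof (cases "P k")
        case True
        hence "\<exists>m::int. \<lfloor>\<alpha> * m + \<beta>\<rfloor> = int (d * k)" using \<open>P k \<longleftrightarrow> _\<close> by blast
        from ind_cases(1)[OF a1, where D="int (d * k)" and \<beta>=\<beta>, OF this]
        have "ind k = of_int 1" unfolding ind_def by (simp only:)
        thus ?thesis using True by simp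
      next
        case False
        hence "\<not> (\<exists>m::int. \<lfloor>\<alpha> * m + \<beta>\<rfloor> = int (d * k))" using \<open>P k \<longleftrightarrow> _\<close> by blast
        from ind_cases(2)[OF a1, where D="int (d * k)" and \<beta>=\<beta>, OF this]
        have "ind k = of_int 0" unfolding ind_def by (simp only:)
        thus ?thesis using False by simp
      qed
      thus ?thesis using False by simp
    qed
  qed
  have diff1: "\<bar>(\<Sum>k\<in>{1..K}. if P k then 1 else 0) - (\<Sum>k\<in>{1..K}. ind k)\<bar> \<le> \<bar>\<beta>\<bar>"
  proof -
    have "\<bar>(\<Sum>k\<in>{1..K}. if P k then 1 else 0) - (\<Sum>k\<in>{1..K}. ind k)\<bar>
        = \<bar>\<Sum>k\<in>{1..K}. (if P k then 1 else 0) - ind k\<bar>" by (simp add: sum_subtractf)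
    also have "\<dots> \<le> (\<Sum>k\<in>{1..K}. \<bar>(if P k then 1 else 0) - ind k\<bar>)" by (rule sum_abs)
    also have "\<dots> \<le> (\<Sum>k\<in>{1..K}. if real k \<le> \<beta> then 1 else 0)" by (intro sum_mono termb) auto
    also have "\<dots> = real (card {k \<in> {1..K}. real k \<le> \<beta>})"
      by (subst sum.inter_filter[symmetric]) auto
    also have "\<dots> \<le> \<bar>\<beta>\<bar>"
    proof -
      have "{k \<in> {1..K}. real k \<le> \<beta>} \<subseteq> {1..nat \<lfloor>\<beta>\<rfloor>}"
      proof
        fix k assume "k \<in> {k \<in> {1..K}. real k \<le> \<beta>}"
        hence "1 \<le> k" "real k \<le> \<beta>" by auto
        hence "int k \<le> \<lfloor>\<beta>\<rfloor>" by linarith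
        thus "k \<in> {1..nat \<lfloor>\<beta>\<rfloor>}" using \<open>1 \<le> k\<close> by auto
      qed
      hence "card {k \<in> {1..K}. real k \<le> \<beta>} \<le> card {1..nat \<lfloor>\<beta>\<rfloor>}" by (intro card_mono) auto
      hence "real (card {k \<in> {1..K}. real k \<le> \<beta>}) \<le> real (nat \<lfloor>\<beta>\<rfloor>)" by simp
      also have "\<dots> \<le> \<bar>\<beta>\<bar>" by (cases "\<beta> \<ge> 0") auto
      finally show ?thesis .
    qed
    finally show ?thesis .
  qed
  define \<theta> where "\<theta> = - (real d * (1 / \<alpha>))"
  define A1 where "A1 = (\<beta> - real d) / \<alpha>"
  define A2 where "A2 = (\<beta> - real d - 1) / \<alpha>"
  have indk: "ind (Suc k) = 1 / \<alpha> + frac (A2 + real k * \<theta>) - frac (A1 + real k * \<theta>)" for k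
  proof -
    have e1: "- ((real (d * Suc k) + 1 - \<beta>) / \<alpha>) = A2 + real k * \<theta>"
      unfolding A2_def \<theta>_def using a1 by (simp add: field_simps)
    have e2: "- ((real (d * Suc k) - \<beta>) / \<alpha>) = A1 + real k * \<theta>"
      unfolding A1_def \<theta>_def using a1 by (simp add: field_simps)
    have "ind (Suc k) = ((real (d * Suc k) + 1 - \<beta>) / \<alpha> + frac (A2 + real k * \<theta>))
                      - ((real (d * Suc k) - \<beta>) / \<alpha> + frac (A1 + real k * \<theta>))"
      unfolding ind_def of_int_diff ceil_frac of_int_of_nat_eq e1 e2 ..
    also have "\<dots> = 1 / \<alpha> + frac (A2 + real k * \<theta>) - frac (A1 + real k * \<theta>)"
      using a1 by (simp add: field_simps)
    finally show ?thesis .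
  qed
  have sumind: "(\<Sum>k\<in>{1..K}. ind k) = real K / \<alpha> + (\<Sum>k<K. frac (A2 + real k * \<theta>)) - (\<Sum>k<K. frac (A1 + real k * \<theta>))"
  proof -
    have "(\<Sum>k\<in>{1..K}. ind k) = (\<Sum>k<K. ind (Suc k))" by (simp add: sum.atLeast1_atMost_eq)
    also have "\<dots> = (\<Sum>k<K. 1 / \<alpha> + frac (A2 + real k * \<theta>) - frac (A1 + real k * \<theta>))" by (simp add: indk)
    also have "\<dots> = real K / \<alpha> + (\<Sum>k<K. frac (A2 + real k * \<theta>)) - (\<Sum>k<K. frac (A1 + real k * \<theta>))"
      by (simp add: sum_subtractf sum.distrib)
    finally show ?thesis .
  qed
  have c1: "\<bar>(\<Sum>k<K. frac (A1 + real k * \<theta>)) - real K / 2\<bar> \<le> C1 * E"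
    unfolding \<theta>_def E_def by (rule core[OF d N dK])
  have c2: "\<bar>(\<Sum>k<K. frac (A2 + real k * \<theta>)) - real K / 2\<bar> \<le> C1 * E"
    unfolding \<theta>_def E_def by (rule core[OF d N dK])
  have CE: "C1 * E \<le> \<bar>C1\<bar> * E" using E1 by (intro mult_right_mono) auto
  have diff2: "\<bar>(\<Sum>k\<in>{1..K}. ind k) - real K / \<alpha>\<bar> \<le> 2 * \<bar>C1\<bar> * E"
    using sumind c1 c2 CE by (simp add: abs_le_iff)
  have diff3: "\<bar>real K / \<alpha> - real N / (\<alpha> * real d)\<bar> \<le> 1"
  proof -
    have Nd: "N = K * d + N mod d" unfolding K_def by simp
    have "N mod d < d" using d by simp
    hence "real (N mod d) < real d" by linarith
    have dr: "real d > 0" using d by simp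
    have "real N / real d = real K + real (N mod d) / real d"
      using Nd dr by (metis add_divide_distrib nonzero_mult_div_cancel_right of_nat_add of_nat_mult less_irrefl)
    moreover have "real (N mod d) / real d < 1" using \<open>real (N mod d) < real d\<close> dr by simp
    moreover have "real (N mod d) / real d \<ge> 0" by simp
    ultimately have "\<bar>real K - real N / real d\<bar> \<le> 1" by simp
    hence "\<bar>real K - real N / real d\<bar> / \<alpha> \<le> 1 / \<alpha>" using a1 by (simp add: divide_right_mono)
    moreover have "\<bar>real K / \<alpha> - real N / (\<alpha> * real d)\<bar> = \<bar>real K - real N / real d\<bar> / \<alpha>"
      using a1 by (simp add: field_simps)
    moreover have "1 / \<alpha> \<le> 1" using a1 by simp
    ultimately show ?thesis by linarith
  qed
  have "\<bar>real (card {n::nat. 1 \<le> n \<and> n \<le> N \<and> d dvd n \<and> int n \<in> beatty \<alpha> \<beta>}) - real N / (\<alpha> * real d)\<bar>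
      \<le> \<bar>\<beta>\<bar> + 2 * \<bar>C1\<bar> * E + 1"
    using cardsum diff1 diff2 diff3 by linarith
  also have "\<dots> \<le> (\<bar>\<beta>\<bar> + 2 * \<bar>C1\<bar> + 1) * E"
  proof -
    have "\<bar>\<beta>\<bar> \<le> \<bar>\<beta>\<bar> * E" using E1 by (simp add: mult_le_cancel_left1)
    moreover have "1 \<le> E" by (rule E1)
    ultimately show ?thesis by (simp add: algebra_simps)
  qed
  finally show ?thesis unfolding E_def .
qed


theorem lemma4p6:
  fixes \<alpha> \<beta> \<tau> :: real
  assumes "\<alpha> > 1" and "\<alpha> \<notin> \<rat>" and "irr_type \<alpha> = ereal \<tau>"
  shows "\<exists>\<epsilon>0>0. \<forall>\<epsilon>. 0 < \<epsilon> \<and> \<epsilon> < \<epsilon>0 \<longrightarrow>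
           (\<exists>C::real. \<forall>d::nat. \<forall>N::nat. d \<ge> 1 \<longrightarrow> N \<ge> 1 \<longrightarrow>
              \<bar>real (card {n::nat. 1 \<le> n \<and> n \<le> N \<and> d dvd n \<and> int n \<in> beatty \<alpha> \<beta>})
                 - real N / (\<alpha> * real d)\<bar>
              \<le> C * real N powr (\<tau> / (1 + \<tau>) + \<epsilon>))"
proof (rule exI[of _ "1::real"], intro conjI allI impI)
  show "(0::real) < 1" by simp
  fix \<epsilon> :: real assume "0 < \<epsilon> \<and> \<epsilon> < 1"
  hence \<epsilon>: "\<epsilon> > 0" by simp
  have a1: "\<alpha> > 1" and irr: "\<alpha> \<notin> \<rat>" and ty: "irr_type \<alpha> = ereal \<tau>" using assms by auto
  have \<tau>0: "\<tau> \<ge> 0" by (rule tau_nonneg[OF irr ty])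
  define t where "t = \<tau> + \<epsilon>"
  have t0: "t > 0" and tt: "t > \<tau>" using \<tau>0 \<epsilon> by (auto simp: t_def)
  obtain c where c: "c > 0" and cb: "\<forall>n::nat. \<forall>p::int. n \<ge> 1 \<longrightarrow> \<bar>\<alpha> * real n - of_int p\<bar> \<ge> c * real n powr (-t)"
    using type_lower[OF irr ty tt] by blast
  obtain c' where c': "c' > 0" and cb': "\<forall>m p. m \<ge> (1::nat) \<longrightarrow> \<bar>real m * (1 / \<alpha>) - of_int p\<bar> \<ge> c' * real m powr (-t)"
    using gamma_lower[OF a1 c, of t] t0 cb by auto
  obtain C1 where C1: "\<forall>d N K a. d \<ge> (1::nat) \<longrightarrow> N \<ge> (1::nat) \<longrightarrow> d * K \<le> N \<longrightarrow>
     \<bar>(\<Sum>k<K. frac (a + real k * (- (real d * (1 / \<alpha>))))) - real K / 2\<bar> \<le> C1 * real N powr (t / (1 + t))"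
    using core[OF t0 c', of "1 / \<alpha>"] cb' by blast
  show "\<exists>C::real. \<forall>d::nat. \<forall>N::nat. d \<ge> 1 \<longrightarrow> N \<ge> 1 \<longrightarrow>
              \<bar>real (card {n::nat. 1 \<le> n \<and> n \<le> N \<and> d dvd n \<and> int n \<in> beatty \<alpha> \<beta>})
                 - real N / (\<alpha> * real d)\<bar>
              \<le> C * real N powr (\<tau> / (1 + \<tau>) + \<epsilon>)"
  proof (intro exI[of _ "\<bar>\<beta>\<bar> + 2 * \<bar>C1\<bar> + 1"] allI impI)
    fix d N :: nat assume d: "d \<ge> 1" and N: "N \<ge> 1"
    have A: "\<bar>real (card {n::nat. 1 \<le> n \<and> n \<le> N \<and> d dvd n \<and> int n \<in> beatty \<alpha> \<beta>})
                 - real N / (\<alpha> * real d)\<bar> \<le> (\<bar>\<beta>\<bar> + 2 * \<bar>C1\<bar> + 1) * real N powr (t / (1 + t))"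
      by (rule assembly[OF a1 t0 _ d N]) (use C1 in blast)
    have ex: "t / (1 + t) \<le> \<tau> / (1 + \<tau>) + \<epsilon>" unfolding t_def using \<tau>0 \<epsilon> by (simp add: field_simps)
    have "real N powr (t / (1 + t)) \<le> real N powr (\<tau> / (1 + \<tau>) + \<epsilon>)"
      using N ex by (intro powr_mono) auto
    hence "(\<bar>\<beta>\<bar> + 2 * \<bar>C1\<bar> + 1) * real N powr (t / (1 + t)) \<le> (\<bar>\<beta>\<bar> + 2 * \<bar>C1\<bar> + 1) * real N powr (\<tau> / (1 + \<tau>) + \<epsilon>)"
      by (intro mult_left_mono) auto
    thus "\<bar>real (card {n::nat. 1 \<le> n \<and> n \<le> N \<and> d dvd n \<and> int n \<in> beatty \<alpha> \<beta>})
                 - real N / (\<alpha> * real d)\<bar> \<le> (\<bar>\<beta>\<bar> + 2 * \<bar>C1\<bar> + 1) * real N powr (\<tau> / (1 + \<tau>) + \<epsilon>)"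
      using A by linarith
  qed
qed

end
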